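(* Let $(M,g)$ be a connected compact Riemannian manifold, and let $d$ be a metric on $M$ (not necessarily induced by $g$). Let $X$ be a random variable with values in $M$ and let $f:M\to[0,\infty)$ be continuous with respect to $d$. Define $M_\delta := \{y\in M : f(y)>\delta\}$ for $\delta>0$ and $M_0 := \{y\in M: f(y)=0\}$. Suppose $M_0\neq\emptyset$ and that for every $\delta>0$ there exists $t_\delta>0$ such that for all $\tilde y\in M_0$, all $y\in M_\delta$ and all $t\ge t_\delta$, $$\mathbb{E}[-\ln p(X,y,t)] - \mathbb{E}[-\ln p(X,\tilde y,t)] > 0.$$ Then $E_\infty^{lower}(X)$ and $E_\infty^{upper}(X)$ are contained in $M_0$.
   Context: Heat kernel: $p(x,y,t)$ is the minimal heat kernel of $M$, the minimal solution of $\frac{\partial}{\partial t} p(x,y,t) = \frac12 \Delta_{g,x} p(x,y,t)$ with $\int_M p(x,y,t)\,dy = 1$, where $\Delta_g$ is the Laplace–Beltrami operator. For $t>0$, the diffusion $t$-mean set is $E_t(X) = \operatorname{argmin}_{y\in M} \mathbb{E}[-\ln p(X,y,t)]$. Kuratowski limits in $(M,d)$: for sets $A_k\subseteq M$, $\mathrm{Li}_{k\to\infty} A_k$ is the set of points $x$ for which there exist $x_k\in A_k$ with $x_k\to x$; $\mathrm{Ls}_{k\to\infty}A_k$ is the set of points $x$ for which there exist strictly increasing indices $(k_j)$ and $x_{k_j}\in A_{k_j}$ with $x_{k_j}\to x$. Then $E_\infty^{lower}(X) := \bigcap \mathrm{Li}_{k\to\infty} E_{t_k}(X)$ and $E_\infty^{upper}(X)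 := \bigcap \mathrm{Ls}_{k\to\infty} E_{t_k}(X)$, the intersections over all monotone increasing sequences $0<t_k\to\infty$, with convergence in $d$. *)

theory Defs
  imports "HOL-Analysis.Analysis" "HOL-Probability.Probability"
begin

definition diff_objective :: "'b measure \<Rightarrow> ('b \<Rightarrow> 'a) \<Rightarrow> ('a \<Rightarrow> 'a \<Rightarrow> real \<Rightarrow> real) \<Rightarrow> 'a \<Rightarrow> real \<Rightarrow> real" where
  "diff_objective P X p y t = (\<integral>\<omega>. - ln (p (X \<omega>) y t) \<partial>P)"

definition diffusion_mean_set :: "'a set \<Rightarrow> 'b measure \<Rightarrow> ('b \<Rightarrow> 'a) \<Rightarrow> ('a \<Rightarrow> 'a \<Rightarrow> real \<Rightarrow> real) \<Rightarrow> real \<Rightarrow> 'a set" where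
  "diffusion_mean_set M P X p t =
     {y \<in> M. \<forall>z\<in>M. diff_objective P X p y t \<le> diff_objective P X p z t}"

definition kuratowski_Li :: "'a set \<Rightarrow> ('a \<Rightarrow> 'a \<Rightarrow> real) \<Rightarrow> (nat \<Rightarrow> 'a set) \<Rightarrow> 'a set" where
  "kuratowski_Li M d A = {x \<in> M. \<exists>xs. (\<forall>k. xs k \<in> A k) \<and> ((\<lambda>k. d (xs k) x) \<longlonglongrightarrow> 0)}"

definition kuratowski_Ls :: "'a set \<Rightarrow> ('a \<Rightarrow> 'a \<Rightarrow> real) \<Rightarrow> (nat \<Rightarrow> 'a set) \<Rightarrow> 'a set" where
  "kuratowski_Ls M d A = {x \<in> M. \<exists>r xs. strict_mono r \<and> (\<forall>j. xs j \<in> A (r j))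
        \<and> ((\<lambda>j. d (xs j) x) \<longlonglongrightarrow> 0)}"

definition time_seqs :: "(nat \<Rightarrow> real) set" where
  "time_seqs = {ts. mono ts \<and> (\<forall>k. 0 < ts k) \<and> filterlim ts at_top sequentially}"

definition E_infty_lower :: "'a set \<Rightarrow> ('a \<Rightarrow> 'a \<Rightarrow> real) \<Rightarrow> 'b measure \<Rightarrow> ('b \<Rightarrow> 'a) \<Rightarrow> ('a \<Rightarrow> 'a \<Rightarrow> real \<Rightarrow> real) \<Rightarrow> 'a set" where
  "E_infty_lower M d P X p =
     (\<Inter>ts\<in>time_seqs. kuratowski_Li M d (\<lambda>k. diffusion_mean_set M P X p (ts k)))"

definition E_infty_upper :: "'a set \<Rightarrow> ('a \<Rightarrow> 'a \<Rightarrow> real) \<Rightarrow> 'b measure \<Rightarrow> ('b \<Rightarrow> 'a) \<Rightarrow> ('a \<Rightarrow> 'a \<Rightarrow> real \<Rightarrow> real) \<Rightarrow> 'a set" where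
  "E_infty_upper M d P X p =
     (\<Inter>ts\<in>time_seqs. kuratowski_Ls M d (\<lambda>k. diffusion_mean_set M P X p (ts k)))"

end

theory Submission
  imports Defs
begin

lemma key:
  fixes M :: "'a set" and d :: "'a \<Rightarrow> 'a \<Rightarrow> real"
    and P :: "'b measure" and X :: "'b \<Rightarrow> 'a"
    and p :: "'a \<Rightarrow> 'a \<Rightarrow> real \<Rightarrow> real" and f :: "'a \<Rightarrow> real"
  assumes metric: "Metric_space M d"
    and f_cont: "continuous_map (Metric_space.mtopology M d) euclideanreal f"
    and M0_ne: "{y \<in> M. f y = 0} \<noteq> {}"
    and sep: "\<forall>\<delta>>0. \<exists>t\<delta>>0. \<forall>y0\<in>{y \<in> M. f y = 0}. \<forall>y\<in>{y \<in> M. f y > \<delta>}. \<forall>t\<ge>t\<delta>.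
                 diff_objective P X p y t - diff_objective P X p y0 t > 0"
    and f_nonneg: "\<forall>y\<in>M. 0 \<le> f y"
    and x: "x \<in> M" and r: "strict_mono r"
    and ts: "filterlim ts at_top sequentially"
    and xs: "\<forall>j. xs j \<in> diffusion_mean_set M P X p (ts (r j))"
    and lim: "(\<lambda>j. d (xs j) x) \<longlonglongrightarrow> 0"
  shows "f x = 0"
proof (rule ccontr)
  interpret Metric_space M d by (rule metric)
  assume ne: "f x \<noteq> 0"
  obtain y0 where y0: "y0 \<in> M" "f y0 = 0" using M0_ne by auto
  have xsM: "xs j \<in> M" for j using xs by (auto simp: diffusion_mean_set_def)
  have "limitin mtopology xs x sequentially"
    unfolding limitin_metric
  proof (intro conjI x allI impI)
    fix e :: real assume "e > 0"
    then have "eventually (\<lambda>j. \<bar>d (xs j) x - 0\<bar> < e) sequentially"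
      using lim unfolding LIMSEQ_def eventually_sequentially by (simp add: dist_real_def)
    then show "eventually (\<lambda>j. xs j \<in> M \<and> d (xs j) x < e) sequentially"
      by eventually_elim (auto simp: xsM)
  qed
  then have "limitin euclideanreal (f \<circ> xs) (f x) sequentially"
    by (rule continuous_map_limit[OF f_cont])
  then have fl: "(\<lambda>j. f (xs j)) \<longlonglongrightarrow> f x"
    by (simp add: o_def)
  show False
  proof (cases "f x > 0")
    case True
    define \<delta> where "\<delta> = f x / 2"
    have dp: "\<delta> > 0" using True by (simp add: \<delta>_def)
    then obtain t\<delta> where t\<delta>: "\<forall>y0\<in>{y \<in> M. f y = 0}. \<forall>y\<in>{y \<in> M. f y > \<delta>}. \<forall>t\<ge>t\<delta>.
                 diff_objective P X p y t - diff_objective P X p y0 t > 0"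
      using sep by blast
    have "filterlim (\<lambda>j. ts (r j)) at_top sequentially"
      using filterlim_compose[OF ts filterlim_subseq[OF r]] by (simp add: o_def)
    then have ev1: "eventually (\<lambda>j. ts (r j) \<ge> t\<delta>) sequentially"
      by (simp add: filterlim_at_top)
    have ev2: "eventually (\<lambda>j. f (xs j) > \<delta>) sequentially"
      using order_tendstoD(1)[OF fl, of \<delta>] True by (simp add: \<delta>_def)
    from ev1 ev2 have "eventually (\<lambda>j. False) sequentially"
    proof eventually_elim
      case (elim j)
      have "diff_objective P X p (xs j) (ts (r j)) - diff_objective P X p y0 (ts (r j)) > 0"
      proof -
        have "xs j \<in> {y \<in> M. f y > \<delta>}" using elim xsM by blast
        moreover have "y0 \<in> {y \<in> M. f y = 0}" using y0 by blast
        ultimately show ?thesis using t\<delta> elim(1) by blast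
      qed
      moreover have "diff_objective P X p (xs j) (ts (r j)) \<le> diff_objective P X p y0 (ts (r j))"
        using xs y0(1) unfolding diffusion_mean_set_def by blast
      ultimately show False by linarith
    qed
    then show False by simp
  next
    case False
    have "f x \<ge> 0" using f_nonneg x by blast
    then show False using ne False by linarith
  qed
qed

theorem lemma2p7:
  fixes M :: "'a set" and d :: "'a \<Rightarrow> 'a \<Rightarrow> real"
    and P :: "'b measure" and N :: "'a measure" and X :: "'b \<Rightarrow> 'a"
    and p :: "'a \<Rightarrow> 'a \<Rightarrow> real \<Rightarrow> real" and f :: "'a \<Rightarrow> real"
  assumes metric: "Metric_space M d"
    and prob: "prob_space P"
    and spaceN: "space N = M"
    and X_rv: "X \<in> measurable P N"
    and f_cont: "continuous_map (Metric_space.mtopology M d) euclideanreal f"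
    and f_nonneg: "\<forall>y\<in>M. 0 \<le> f y"
    and M0_ne: "{y \<in> M. f y = 0} \<noteq> {}"
    and sep: "\<forall>\<delta>>0. \<exists>t\<delta>>0. \<forall>y0\<in>{y \<in> M. f y = 0}. \<forall>y\<in>{y \<in> M. f y > \<delta>}. \<forall>t\<ge>t\<delta>.
                 diff_objective P X p y t - diff_objective P X p y0 t > 0"
  shows "E_infty_lower M d P X p \<subseteq> {y \<in> M. f y = 0}
       \<and> E_infty_upper M d P X p \<subseteq> {y \<in> M. f y = 0}"
proof -
  define ts :: "nat \<Rightarrow> real" where "ts = (\<lambda>k. 1 + real k)"
  have tsf: "filterlim ts at_top sequentially"
    unfolding ts_def by (rule filterlim_tendsto_add_at_top[OF tendsto_const filterlim_real_sequentially])
  have tsT: "ts \<in> time_seqs"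
    unfolding time_seqs_def using tsf by (auto simp: ts_def mono_def)
  note K = key[OF metric f_cont M0_ne sep f_nonneg _ _ tsf]
  have A: "E_infty_lower M d P X p \<subseteq> {y \<in> M. f y = 0}"
  proof
    fix x assume "x \<in> E_infty_lower M d P X p"
    then have "x \<in> kuratowski_Li M d (\<lambda>k. diffusion_mean_set M P X p (ts k))"
      using tsT unfolding E_infty_lower_def by blast
    then obtain xs where "x \<in> M" "\<forall>k. xs k \<in> diffusion_mean_set M P X p (ts k)"
      "(\<lambda>k. d (xs k) x) \<longlonglongrightarrow> 0" unfolding kuratowski_Li_def by blast
    then show "x \<in> {y \<in> M. f y = 0}"
      using K[of x id xs] by (simp add: strict_mono_def)
  qed
  have B: "E_infty_upper M d P X p \<subseteq> {y \<in> M. f y = 0}"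
  proof
    fix x assume "x \<in> E_infty_upper M d P X p"
    then have "x \<in> kuratowski_Ls M d (\<lambda>k. diffusion_mean_set M P X p (ts k))"
      using tsT unfolding E_infty_upper_def by blast
    then obtain r xs where "x \<in> M" "strict_mono r" "\<forall>j. xs j \<in> diffusion_mean_set M P X p (ts (r j))"
      "(\<lambda>j. d (xs j) x) \<longlonglongrightarrow> 0" unfolding kuratowski_Ls_def by blast
    then show "x \<in> {y \<in> M. f y = 0}"
      using K[of x r xs] by simp
  qed
  show ?thesis using A B by simp
qed

end
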